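(* Fix $\varepsilon_0\ge0$ and $n\ge1$. Let $d\ge2$, $\rho\in\mathfrak M_d$, $i\ne j$, and assume $W_\rho$ is $\varepsilon_0$-LDP. Suppose that for every $\alpha\ge1$ both $$H_\alpha\bigl(Q^{ij}_{1,n},Q^{ij}_{0,n}\bigr)=H_\alpha\bigl(Q^{\mathrm{BRR}}_{1,n},Q^{\mathrm{BRR}}_{0,n}\bigr)\quad\text{and}\quad H_\alpha\bigl(Q^{ij}_{0,n},Q^{ij}_{1,n}\bigr)=H_\alpha\bigl(Q^{\mathrm{BRR}}_{0,n},Q^{\mathrm{BRR}}_{1,n}\bigr).$$ Then $\mu_{ij}=\mu^\star$. Consequently the pairwise likelihood ratio $dW_\rho(\cdot\mid j)/dW_\rho(\cdot\mid i)$ takes only the values $e^{\pm\varepsilon_0}$ almost surely under $W_\rho(\cdot\mid i)$ (when $\varepsilon_0>0$), and the two-row experiment obtained by merging outputs according to the value of this likelihood ratio is exactly binary randomized response with parameter $\varepsilon_0$ (rows $i,j$ mapped to rows $1,2$).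
   Context: Let $H\in\mathbb R^{d\times(d-1)}$ have orthonormal columns spanning $\{u\in\mathbb R^d:\mathbf 1^\top u=0\}$, set $\gamma_i:=H^\top e_i$ ($i\in[d]$), $\mathcal X_d:=\{x\in\mathbb R^{d-1}:1+\gamma_i^\top x\ge0\ \forall i\}$. An anchored law is a Borel probability measure $\rho$ on $\mathcal X_d$ with $\int x\,\rho(dx)=0$; $\mathfrak M_d$ is the set of anchored laws, and $W_\rho(B\mid i):=\int_B(1+\gamma_i^\top x)\rho(dx)$. A channel $W$ is $\varepsilon_0$-LDP if $W(B\mid j)\le e^{\varepsilon_0}W(B\mid i)$ for all measurable $B$ and all $i,j$. For $i\ne j$, $Q^{ij}_{0,n}:=W_\rho(\cdot\mid i)^{\otimes n}$ and $Q^{ij}_{1,n}:=\frac1n\sum_{m=1}^n W_\rho(\cdot\mid i)^{\otimes(m-1)}\otimes W_\rho(\cdot\mid j)\otimes W_\rho(\cdot\mid i)^{\otimes(n-m)}$. Binary randomized response (BRR) with parameter $\varepsilon_0$ is the channel on $\{1,2\}$ with $W(1\mid1)=W(2\mid2)=e^{\varepsilon_0}/(1+e^{\varepsilon_0})$, $W(2\mid1)=W(1\mid2)=1/(1+e^{\varepsilon_0})$; $Q^{\mathrm{BRR}}_{0,n},Q^{\mathrm{BRR}}_{1,n}$ are its analogous pair with $(i,j)=(1,2)$. For $\alpha\ge1$, $H_\alpha(P,Q):=\int(dP/dQ-\alpha)_+\,dQ$. $\mu_{ij}$ is the law of $\frac{dW_\rho(\cdot\mid j)}{dW_\rho(\cdot\mid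 i)}(X)$ with $X\sim W_\rho(\cdot\mid i)$. With $a:=e^{-\varepsilon_0}$, $b:=e^{\varepsilon_0}$: if $\varepsilon_0=0$, $\mu^\star:=\delta_1$; if $\varepsilon_0>0$, $\mu^\star:=\frac{b-1}{b-a}\delta_a+\frac{1-a}{b-a}\delta_b$ (the unique mean-one law on $\{a,b\}$). *)

theory Defs
  imports "HOL-Probability.Probability"
begin

text \<open>Coordinates: R^d is real^'d, R^(d-1) is real^'k with CARD('d) = CARD('k) + 1.
  H :: real^'k^'d is the d x (d-1) matrix; its i-th row is gamma_i = H^T e_i.\<close>

definition gam :: "real^'k^'d \<Rightarrow> 'd \<Rightarrow> real^'k" where
  "gam H i = transpose H *v axis i 1"

definition Xd :: "real^'k^'d \<Rightarrow> (real^'k) set" where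
  "Xd H = {x. \<forall>i. 1 + gam H i \<bullet> x \<ge> 0}"

definition anchored :: "real^'k^'d \<Rightarrow> (real^'k) measure \<Rightarrow> bool" where
  "anchored H \<rho> \<longleftrightarrow> prob_space \<rho> \<and> space \<rho> = Xd H \<and>
     sets \<rho> = sets (restrict_space borel (Xd H)) \<and>
     integrable \<rho> (\<lambda>x. x) \<and> integral\<^sup>L \<rho> (\<lambda>x. x) = 0"

definition Wch :: "real^'k^'d \<Rightarrow> (real^'k) measure \<Rightarrow> 'd \<Rightarrow> (real^'k) measure" where
  "Wch H \<rho> i = density \<rho> (\<lambda>x. ennreal (1 + gam H i \<bullet> x))"

definition ldp :: "real \<Rightarrow> ('i \<Rightarrow> 'a measure) \<Rightarrow> 'i set \<Rightarrow> bool" where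
  "ldp \<epsilon> W I \<longleftrightarrow> (\<forall>i\<in>I. \<forall>j\<in>I. \<forall>B\<in>sets (W i).
      emeasure (W j) B \<le> ennreal (exp \<epsilon>) * emeasure (W i) B)"

definition mixture :: "'a measure \<Rightarrow> 'm set \<Rightarrow> ('m \<Rightarrow> real) \<Rightarrow> ('m \<Rightarrow> 'a measure) \<Rightarrow> 'a measure" where
  "mixture \<Omega> I w Ms = measure_of (space \<Omega>) (sets \<Omega>)
      (\<lambda>A. \<Sum>m\<in>I. ennreal (w m) * emeasure (Ms m) A)"

definition Q0 :: "nat \<Rightarrow> 'a measure \<Rightarrow> 'a measure \<Rightarrow> (nat \<Rightarrow> 'a) measure" where
  "Q0 n Wi Wj = PiM {..<n} (\<lambda>_. Wi)"

definition Q1 :: "nat \<Rightarrow> 'a measure \<Rightarrow> 'a measure \<Rightarrow> (nat \<Rightarrow> 'a) measure" where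
  "Q1 n Wi Wj = mixture (PiM {..<n} (\<lambda>_. Wi)) {..<n} (\<lambda>_. 1 / real n)
      (\<lambda>m. PiM {..<n} (\<lambda>k. if k = m then Wj else Wi))"

definition hockey :: "real \<Rightarrow> 'a measure \<Rightarrow> 'a measure \<Rightarrow> real" where
  "hockey \<alpha> P Q = integral\<^sup>L Q (\<lambda>x. max 0 (enn2real (RN_deriv Q P x) - \<alpha>))"

definition brr :: "real \<Rightarrow> nat \<Rightarrow> nat measure" where
  "brr \<epsilon> k = point_measure {1, 2}
     (\<lambda>y. ennreal (if y = k then exp \<epsilon> / (1 + exp \<epsilon>) else 1 / (1 + exp \<epsilon>)))"

definition LR :: "'a measure \<Rightarrow> 'a measure \<Rightarrow> 'a \<Rightarrow> real" where
  "LR Wi Wj x = enn2real (RN_deriv Wi Wj x)"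

definition mu_lr :: "'a measure \<Rightarrow> 'a measure \<Rightarrow> real measure" where
  "mu_lr Wi Wj = distr Wi borel (LR Wi Wj)"

definition mu_star :: "real \<Rightarrow> real measure" where
  "mu_star \<epsilon> = (if \<epsilon> = 0 then return borel 1 else
     mixture borel {exp (-\<epsilon>), exp \<epsilon>}
       (\<lambda>t. if t = exp (-\<epsilon>) then (exp \<epsilon> - 1) / (exp \<epsilon> - exp (-\<epsilon>))
            else (1 - exp (-\<epsilon>)) / (exp \<epsilon> - exp (-\<epsilon>)))
       (\<lambda>t. return borel t))"

definition merge_lr :: "real \<Rightarrow> 'a measure \<Rightarrow> 'a measure \<Rightarrow> 'a \<Rightarrow> nat" where
  "merge_lr \<epsilon> Wi Wj x = (if LR Wi Wj x = exp (-\<epsilon>) then 1 else 2)"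

end

theory Submission
  imports Defs
begin


lemma PiM_density_single:
  fixes P :: "'a measure" and g :: "'a \<Rightarrow> ennreal"
  assumes P: "prob_space P" and Pg: "prob_space (density P g)"
    and g[measurable]: "g \<in> borel_measurable P" and I: "finite I" and m: "m \<in> I"
  shows "PiM I (\<lambda>k. if k = m then density P g else P) = density (PiM I (\<lambda>_. P)) (\<lambda>x. g (x m))"
proof -
  let ?M = "\<lambda>k. if k = m then density P g else P"
  interpret M: product_sigma_finite ?M
    unfolding product_sigma_finite_def using P Pg
    by (auto simp: prob_space_imp_sigma_finite)
  interpret C: product_sigma_finite "\<lambda>_. P"
    unfolding product_sigma_finite_def using P
    by (auto simp: prob_space_imp_sigma_finite)
  have sets_eq: "sets (PiM I (\<lambda>_. P)) = sets (PiM I ?M)"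
    by (intro sets_PiM_cong) auto
  show ?thesis
  proof (rule M.PiM_eqI[symmetric])
    show "finite I" by fact
    show "sets (density (PiM I (\<lambda>_. P)) (\<lambda>x. g (x m))) = sets (PiM I ?M)"
      using sets_eq by simp
  next
    fix A assume A: "\<And>i. i \<in> I \<Longrightarrow> A i \<in> sets (?M i)"
    then have A': "\<And>i. i \<in> I \<Longrightarrow> A i \<in> sets P" by (metis sets_density)
    have mg: "(\<lambda>x. g (x m)) \<in> borel_measurable (PiM I (\<lambda>_. P))"
      using m by measurable
    have "emeasure (density (PiM I (\<lambda>_. P)) (\<lambda>x. g (x m))) (Pi\<^sub>E I A)
        = (\<integral>\<^sup>+ x. g (x m) * indicator (Pi\<^sub>E I A) x \<partial>PiM I (\<lambda>_. P))"
      using A' I by (subst emeasure_density) (auto intro!: sets_PiM_I_finite mg)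
    also have "\<dots> = (\<integral>\<^sup>+ x. (\<Prod>k\<in>I. (if k = m then g (x k) else 1) * indicator (A k) (x k)) \<partial>PiM I (\<lambda>_. P))"
    proof (rule nn_integral_cong)
      fix x assume x: "x \<in> space (PiM I (\<lambda>_. P))"
      have "(\<Prod>k\<in>I. (if k = m then g (x k) else 1) * indicator (A k) (x k))
          = (\<Prod>k\<in>I. (if k = m then g (x k) else 1)) * (\<Prod>k\<in>I. indicator (A k) (x k))"
        by (simp add: prod.distrib)
      also have "(\<Prod>k\<in>I. (if k = m then g (x k) else 1)) = g (x m)"
        using I m by (simp add: prod.If_cases Int_absorb1)
      also have "(\<Prod>k\<in>I. indicator (A k) (x k) :: ennreal) = indicator (Pi\<^sub>E I A) x"
        using x by (auto simp: indicator_def space_PiM PiE_def Pi_def extensional_def prod_zero_iff I)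
      finally show "g (x m) * indicator (Pi\<^sub>E I A) x = (\<Prod>k\<in>I. (if k = m then g (x k) else 1) * indicator (A k) (x k))" by simp
    qed
    also have "\<dots> = (\<Prod>k\<in>I. \<integral>\<^sup>+ y. (if k = m then g y else 1) * indicator (A k) y \<partial>P)"
      using A' I by (intro C.product_nn_integral_prod) auto
    also have "\<dots> = (\<Prod>k\<in>I. emeasure (?M k) (A k))"
    proof (rule prod.cong)
      fix k assume k: "k \<in> I"
      show "(\<integral>\<^sup>+ y. (if k = m then g y else 1) * indicator (A k) y \<partial>P) = emeasure (?M k) (A k)"
        using A'[OF k] by (cases "k = m") (auto simp: emeasure_density)
    qed simp
    finally show "emeasure (density (PiM I (\<lambda>_. P)) (\<lambda>x. g (x m))) (Pi\<^sub>E I A) = (\<Prod>k\<in>I. emeasure (?M k) (A k))" .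
  qed
qed

lemma Q1_density:
  fixes P :: "'a measure" and L :: "'a \<Rightarrow> real"
  assumes P: "prob_space P" and Pg: "prob_space (density P (\<lambda>x. ennreal (L x)))"
    and L[measurable]: "L \<in> borel_measurable P" and n: "n \<ge> 1"
    and Lnn: "\<And>x. x \<in> space P \<Longrightarrow> 0 \<le> L x"
  shows "Q1 n P (density P (\<lambda>x. ennreal (L x)))
       = density (PiM {..<n} (\<lambda>_. P)) (\<lambda>x. ennreal ((\<Sum>m<n. L (x m)) / real n))"
proof -
  let ?Q = "density P (\<lambda>x. ennreal (L x))"
  let ?\<Pi> = "PiM {..<n} (\<lambda>_. P)"
  let ?D = "density ?\<Pi> (\<lambda>x. ennreal ((\<Sum>m<n. L (x m)) / real n))"
  have "?D = measure_of (space ?\<Pi>) (sets ?\<Pi>) (emeasure ?D)"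
    using measure_of_of_measure[of ?D] by simp
  also have "\<dots> = measure_of (space ?\<Pi>) (sets ?\<Pi>)
      (\<lambda>A. \<Sum>m\<in>{..<n}. ennreal (1 / real n) * emeasure (PiM {..<n} (\<lambda>k. if k = m then ?Q else P)) A)"
  proof (rule measure_of_eq)
    show "sets ?\<Pi> \<subseteq> Pow (space ?\<Pi>)" by (rule sets.space_closed)
  next
    fix A assume "A \<in> sigma_sets (space ?\<Pi>) (sets ?\<Pi>)"
    then have A[measurable]: "A \<in> sets ?\<Pi>" by (simp add: sets.sigma_sets_eq)
    have "emeasure ?D A = (\<integral>\<^sup>+ x. ennreal ((\<Sum>m<n. L (x m)) / real n) * indicator A x \<partial>?\<Pi>)"
      by (subst emeasure_density) auto
    also have "\<dots> = (\<integral>\<^sup>+ x. (\<Sum>m<n. ennreal (1 / real n) * (ennreal (L (x m)) * indicator A x)) \<partial>?\<Pi>)"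
    proof (rule nn_integral_cong)
      fix x assume x: "x \<in> space ?\<Pi>"
      have nn: "\<And>m. m < n \<Longrightarrow> 0 \<le> L (x m)"
        using x Lnn by (auto simp: space_PiM PiE_def Pi_def)
      have "ennreal ((\<Sum>m<n. L (x m)) / real n) = (\<Sum>m<n. ennreal (1 / real n) * ennreal (L (x m)))"
      proof -
        have "(\<Sum>m<n. ennreal (1 / real n) * ennreal (L (x m))) = (\<Sum>m<n. ennreal (L (x m) / real n))"
          using nn by (intro sum.cong) (auto simp: ennreal_mult[symmetric])
        also have "\<dots> = ennreal (\<Sum>m<n. L (x m) / real n)"
          using nn by (intro sum_ennreal) auto
        finally show ?thesis by (simp add: sum_divide_distrib)
      qed
      then show "ennreal ((\<Sum>m<n. L (x m)) / real n) * indicator A x = (\<Sum>m<n. ennreal (1 / real n) * (ennreal (L (x m)) * indicator A x))"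
        by (simp add: sum_distrib_right mult.assoc)
    qed
    also have "\<dots> = (\<Sum>m<n. ennreal (1 / real n) * (\<integral>\<^sup>+ x. ennreal (L (x m)) * indicator A x \<partial>?\<Pi>))"
      by (subst nn_integral_sum) (auto simp: nn_integral_cmult)
    also have "\<dots> = (\<Sum>m<n. ennreal (1 / real n) * emeasure (PiM {..<n} (\<lambda>k. if k = m then ?Q else P)) A)"
    proof (rule sum.cong)
      fix m assume m: "m \<in> {..<n}"
      have "PiM {..<n} (\<lambda>k. if k = m then ?Q else P) = density ?\<Pi> (\<lambda>x. ennreal (L (x m)))"
        using PiM_density_single[OF P Pg _ _ m] by simp
      then show "ennreal (1 / real n) * (\<integral>\<^sup>+ x. ennreal (L (x m)) * indicator A x \<partial>?\<Pi>) = ennreal (1 / real n) * emeasure (PiM {..<n} (\<lambda>k. if k = m then ?Q else P)) A"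
        using m by (simp add: emeasure_density)
    qed simp
    finally show "emeasure ?D A = (\<Sum>m\<in>{..<n}. ennreal (1 / real n) * emeasure (PiM {..<n} (\<lambda>k. if k = m then ?Q else P)) A)" .
  qed
  finally show ?thesis unfolding Q1_def mixture_def by simp
qed



lemma weier:
  fixes u :: "nat \<Rightarrow> real"
  assumes "\<And>k. k < n \<Longrightarrow> 0 \<le> u k \<and> u k \<le> 1"
  shows "1 - (\<Sum>k<n. (1 - u k)) \<le> (\<Prod>k<n. u k)"
  using assms
proof (induction n)
  case 0 then show ?case by simp
next
  case (Suc n)
  let ?V = "\<Sum>k<n. (1 - u k)"
  have IH: "1 - ?V \<le> (\<Prod>k<n. u k)" using Suc by auto
  have un: "0 \<le> u n" "u n \<le> 1" using Suc.prems[of n] by auto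
  have V0: "0 \<le> ?V" using Suc.prems by (intro sum_nonneg) auto
  have "0 \<le> ?V * (1 - u n)" using V0 un by simp
  then have "1 - (?V + (1 - u n)) \<le> (1 - ?V) * u n"
    by (simp add: algebra_simps)
  also have "\<dots> \<le> (\<Prod>k<n. u k) * u n" using IH un by (intro mult_right_mono) auto
  finally show ?case by (simp add: add.commute)
qed

lemma pw_all:
  fixes u :: "nat \<Rightarrow> real"
  assumes u: "\<And>k. k < n \<Longrightarrow> 0 \<le> u k \<and> u k \<le> 1" and n: "n \<ge> 1"
  shows "max 0 (1 - 2 * (\<Sum>k<n. (1 - u k))) \<le> (\<Prod>k<n. u k)"
    and "(\<forall>k<n. 0 < u k) \<Longrightarrow> (\<exists>k<n. u k < 1) \<Longrightarrow> max 0 (1 - 2 * (\<Sum>k<n. (1 - u k))) < (\<Prod>k<n. u k)"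
    and "(\<forall>k<n. u k = 0 \<or> u k = 1) \<Longrightarrow> max 0 (1 - 2 * (\<Sum>k<n. (1 - u k))) = (\<Prod>k<n. u k)"
proof -
  let ?V = "\<Sum>k<n. (1 - u k)"
  have W: "1 - ?V \<le> (\<Prod>k<n. u k)" by (rule weier) (use u in auto)
  have V0: "0 \<le> ?V" using u by (intro sum_nonneg) auto
  have P0: "0 \<le> (\<Prod>k<n. u k)" using u by (intro prod_nonneg) auto
  show "max 0 (1 - 2 * ?V) \<le> (\<Prod>k<n. u k)" using W V0 P0 by linarith
  show "max 0 (1 - 2 * ?V) < (\<Prod>k<n. u k)" if pos: "\<forall>k<n. 0 < u k" and ex: "\<exists>k<n. u k < 1"
  proof -
    from ex obtain k where k: "k < n" "u k < 1" by auto
    have "0 < ?V"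
      using k u by (intro sum_pos2[of _ k]) auto
    moreover have "0 < (\<Prod>k<n. u k)" using pos by (intro prod_pos) auto
    ultimately show ?thesis using W by linarith
  qed
  show "max 0 (1 - 2 * ?V) = (\<Prod>k<n. u k)" if b: "\<forall>k<n. u k = 0 \<or> u k = 1"
  proof (cases "\<forall>k<n. u k = 1")
    case True then show ?thesis by simp
  next
    case False
    then obtain k where k: "k < n" "u k = 0" using b by auto
    have "(\<Prod>k<n. u k) = 0" using k by (intro prod_zero) auto
    moreover have "1 \<le> ?V"
    proof -
      have "1 - u k \<le> ?V" using k u by (intro member_le_sum) auto
      then show ?thesis using k by simp
    qed
    ultimately show ?thesis by simp
  qed
qed



lemma hockey_eq:
  fixes P :: "'a measure" and L :: "'a \<Rightarrow> real"
  assumes P: "prob_space P" and Pg: "prob_space (density P (\<lambda>x. ennreal (L x)))"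
    and L[measurable]: "L \<in> borel_measurable P" and n: "n \<ge> 1"
    and Lnn: "\<And>x. x \<in> space P \<Longrightarrow> 0 \<le> L x"
  shows "hockey \<alpha> (Q1 n P (density P (\<lambda>x. ennreal (L x)))) (Q0 n P (density P (\<lambda>x. ennreal (L x))))
       = (\<integral>x. max 0 ((\<Sum>m<n. L (x m)) / real n - \<alpha>) \<partial>PiM {..<n} (\<lambda>_. P))"
proof -
  let ?\<Pi> = "PiM {..<n} (\<lambda>_. P)"
  let ?S = "\<lambda>x. (\<Sum>m<n. L (x m)) / real n"
  interpret \<Pi>: prob_space ?\<Pi> using P by (intro prob_space_PiM) auto
  have S[measurable]: "?S \<in> borel_measurable ?\<Pi>" by measurable
  have AE: "AE x in ?\<Pi>. ennreal (?S x) = RN_deriv ?\<Pi> (density ?\<Pi> (\<lambda>x. ennreal (?S x))) x"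
    by (rule \<Pi>.RN_deriv_unique) auto
  have Snn: "\<And>x. x \<in> space ?\<Pi> \<Longrightarrow> 0 \<le> ?S x"
    using Lnn by (auto simp: space_PiM PiE_def Pi_def intro!: divide_nonneg_nonneg sum_nonneg)
  have AE': "AE x in ?\<Pi>. max 0 (enn2real (RN_deriv ?\<Pi> (density ?\<Pi> (\<lambda>x. ennreal (?S x))) x) - \<alpha>) = max 0 (?S x - \<alpha>)"
    using AE AE_space
  proof eventually_elim
    case (elim x)
    then show ?case using Snn[of x] by (metis enn2real_ennreal)
  qed
  have Q1eq: "Q1 n P (density P (\<lambda>x. ennreal (L x))) = density ?\<Pi> (\<lambda>x. ennreal (?S x))"
    by (rule Q1_density[OF P Pg L n Lnn])
  show ?thesis
    unfolding hockey_def Q0_def Q1eq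
    by (rule integral_cong_AE[OF _ _ AE']) auto
qed

lemma core:
  fixes P :: "'a measure" and L :: "'a \<Rightarrow> real" and a b :: real and n :: nat
  assumes P: "prob_space P" and L[measurable]: "L \<in> borel_measurable P"
    and bnd: "\<And>x. x \<in> space P \<Longrightarrow> a \<le> L x \<and> L x \<le> b"
    and a0: "0 < a" and a1: "a < 1" and b1: "1 < b"
    and int1: "integral\<^sup>L P L = 1" and n: "n \<ge> 1"
  defines "c \<equiv> b - (b - a) / (2 * real n)"
  shows "(\<integral>x. max 0 ((\<Sum>m<n. L (x m)) / real n - c) \<partial>PiM {..<n} (\<lambda>_. P))
            \<le> (b - c) * ((1 - a) / (b - a)) ^ n"
    and "(\<And>x. x \<in> space P \<Longrightarrow> L x = a \<or> L x = b) \<Longrightarrow>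
         (\<integral>x. max 0 ((\<Sum>m<n. L (x m)) / real n - c) \<partial>PiM {..<n} (\<lambda>_. P))
            = (b - c) * ((1 - a) / (b - a)) ^ n"
    and "(\<integral>x. max 0 ((\<Sum>m<n. L (x m)) / real n - c) \<partial>PiM {..<n} (\<lambda>_. P))
            = (b - c) * ((1 - a) / (b - a)) ^ n \<Longrightarrow>
         emeasure P {x \<in> space P. a < L x \<and> L x < b} = 0"
proof -
  let ?\<Pi> = "PiM {..<n} (\<lambda>_. P)"
  define u where "u l = (l - a) / (b - a)" for l
  define G where "G x = max 0 ((\<Sum>m<n. L (x m)) / real n - c)" for x
  define F where "F x = (b - c) * (\<Prod>k<n. u (L (x k)))" for x
  interpret P: prob_space P by fact
  interpret \<Pi>: prob_space ?\<Pi> using P by (intro prob_space_PiM) auto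
  interpret C: product_sigma_finite "\<lambda>_. P"
    unfolding product_sigma_finite_def using P by (auto simp: prob_space_imp_sigma_finite)
  have ba: "0 < b - a" using a1 b1 by simp
  have bc: "b - c = (b - a) / (2 * real n)" unfolding c_def by simp
  have bc0: "0 < b - c" unfolding bc using ba n by simp
  have sp: "\<And>x k. x \<in> space ?\<Pi> \<Longrightarrow> k < n \<Longrightarrow> x k \<in> space P"
    by (auto simp: space_PiM PiE_def Pi_def)
  have u01: "\<And>x k. x \<in> space ?\<Pi> \<Longrightarrow> k < n \<Longrightarrow> 0 \<le> u (L (x k)) \<and> u (L (x k)) \<le> 1"
    using bnd sp ba by (auto simp: u_def divide_le_eq_1)
  have Gform: "G x = (b - c) * max 0 (1 - 2 * (\<Sum>k<n. (1 - u (L (x k)))))" if x: "x \<in> space ?\<Pi>" for x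
  proof -
    have "(\<Sum>k<n. (1 - u (L (x k)))) = (\<Sum>k<n. (b - L (x k)) / (b - a))"
      using ba by (intro sum.cong) (auto simp: u_def field_simps)
    also have "\<dots> = (real n * b - (\<Sum>k<n. L (x k))) / (b - a)"
      by (simp add: sum_divide_distrib[symmetric] sum_subtractf)
    finally have V: "(\<Sum>k<n. (1 - u (L (x k)))) = (real n * b - (\<Sum>k<n. L (x k))) / (b - a)" .
    have "(\<Sum>m<n. L (x m)) / real n - c = (b - c) * (1 - 2 * ((real n * b - (\<Sum>k<n. L (x k))) / (b - a)))"
      using ba n unfolding c_def by (simp add: field_simps)
    then show ?thesis unfolding G_def V using bc0
      by (simp add: max_def mult_le_0_iff) (auto simp: zero_le_mult_iff)
  qed
  have F0: "\<And>x. x \<in> space ?\<Pi> \<Longrightarrow> 0 \<le> F x \<and> F x \<le> b - c"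
  proof -
    fix x assume x: "x \<in> space ?\<Pi>"
    have "0 \<le> (\<Prod>k<n. u (L (x k)))" "(\<Prod>k<n. u (L (x k))) \<le> 1"
      using u01[OF x] by (auto intro!: prod_nonneg prod_le_1)
    then show "0 \<le> F x \<and> F x \<le> b - c" unfolding F_def using bc0
      by (auto intro: mult_left_le)
  qed
  have GF: "\<And>x. x \<in> space ?\<Pi> \<Longrightarrow> 0 \<le> G x \<and> G x \<le> F x"
    unfolding Gform F_def using pw_all(1) u01 bc0 n by (auto simp: G_def intro!: mult_left_mono)
  have Fm[measurable]: "F \<in> borel_measurable ?\<Pi>" unfolding F_def u_def by measurable
  have Gm[measurable]: "G \<in> borel_measurable ?\<Pi>" unfolding G_def by measurable
  have Fi: "integrable ?\<Pi> F"
    by (rule \<Pi>.integrable_const_bound[where B="b - c"]) (use F0 in auto)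
  have Gb: "norm (G x) \<le> b - c" if x: "x \<in> space ?\<Pi>" for x
    using F0[OF x] GF[OF x] by simp
  have Gi: "integrable ?\<Pi> G"
    by (rule \<Pi>.integrable_const_bound[where B="b - c"]) (use Gb in auto)
  have Li: "integrable P L"
    by (rule P.integrable_const_bound[where B="b"]) (use bnd a0 in \<open>auto intro!: AE_I2 simp: abs_le_iff\<close>, fastforce+)
  have intu: "(\<integral>y. u (L y) \<partial>P) = (1 - a) / (b - a)"
    unfolding u_def using Li int1 by (simp add: P.prob_space)
  have intF: "integral\<^sup>L ?\<Pi> F = (b - c) * ((1 - a) / (b - a)) ^ n"
  proof -
    have "integral\<^sup>L ?\<Pi> F = (b - c) * (\<integral>x. (\<Prod>k<n. u (L (x k))) \<partial>?\<Pi>)"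
      unfolding F_def by simp
    also have "(\<integral>x. (\<Prod>k<n. u (L (x k))) \<partial>?\<Pi>) = (\<Prod>k<n. (\<integral>y. u (L y) \<partial>P))"
      using Li by (intro C.product_integral_prod) (auto simp: u_def)
    finally show ?thesis using intu by simp
  qed
  show le: "integral\<^sup>L ?\<Pi> G \<le> (b - c) * ((1 - a) / (b - a)) ^ n"
    unfolding intF[symmetric] using Fi Gi GF by (intro integral_mono) auto
  show "integral\<^sup>L ?\<Pi> G = (b - c) * ((1 - a) / (b - a)) ^ n"
    if ab: "\<And>x. x \<in> space P \<Longrightarrow> L x = a \<or> L x = b"
  proof -
    have "\<And>x. x \<in> space ?\<Pi> \<Longrightarrow> G x = F x"
    proof -
      fix x assume x: "x \<in> space ?\<Pi>"
      have "\<forall>k<n. u (L (x k)) = 0 \<or> u (L (x k)) = 1"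
        using ab sp[OF x] ba by (auto simp: u_def)
      then show "G x = F x" unfolding Gform[OF x] F_def using pw_all(3)[OF _ n] u01[OF x] by auto
    qed
    then have "integral\<^sup>L ?\<Pi> G = integral\<^sup>L ?\<Pi> F" by (intro Bochner_Integration.integral_cong) auto
    then show ?thesis using intF by simp
  qed
  show "emeasure P {x \<in> space P. a < L x \<and> L x < b} = 0"
    if eq: "integral\<^sup>L ?\<Pi> G = (b - c) * ((1 - a) / (b - a)) ^ n"
  proof -
    have "integral\<^sup>L ?\<Pi> (\<lambda>x. F x - G x) = 0" using eq intF Fi Gi by simp
    then have AEeq: "AE x in ?\<Pi>. F x - G x = 0"
      using integral_nonneg_eq_0_iff_AE[of ?\<Pi> "\<lambda>x. F x - G x"] Fi Gi GF by (auto intro!: AE_I2)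
    define A where "A (k::nat) = (if k = 0 then {x \<in> space P. a < L x \<and> L x < b} else {x \<in> space P. a < L x})" for k
    have s1: "{x \<in> space P. a < L x \<and> L x < b} \<in> sets P" by measurable
    have s2: "{x \<in> space P. a < L x} \<in> sets P" by measurable
    have Aset: "\<And>k. A k \<in> sets P" unfolding A_def using s1 s2 by simp
    have Bsub: "Pi\<^sub>E {..<n} A \<subseteq> {x \<in> space ?\<Pi>. \<not> (F x - G x = 0)}"
    proof
      fix x assume x: "x \<in> Pi\<^sub>E {..<n} A"
      have xs: "x \<in> space ?\<Pi>" using x by (auto simp: space_PiM A_def PiE_def Pi_def split: if_splits)
      have pos: "\<forall>k<n. 0 < u (L (x k))"
        using x ba by (auto simp: A_def u_def PiE_def Pi_def split: if_splits)
      have lt: "\<exists>k<n. u (L (x k)) < 1"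
        using x ba n by (intro exI[of _ 0]) (auto simp: A_def u_def PiE_def Pi_def)
      have "G x < F x" unfolding Gform[OF xs] F_def using pw_all(2)[OF _ n pos lt] u01[OF xs] bc0
        by (auto intro!: mult_strict_left_mono)
      then show "x \<in> {x \<in> space ?\<Pi>. \<not> (F x - G x = 0)}" using xs by auto
    qed
    from AEeq obtain N where N: "{x \<in> space ?\<Pi>. \<not> (F x - G x = 0)} \<subseteq> N" "emeasure ?\<Pi> N = 0" "N \<in> sets ?\<Pi>"
      by (rule AE_E)
    have "emeasure ?\<Pi> (Pi\<^sub>E {..<n} A) = 0"
      using emeasure_mono[OF order_trans[OF Bsub N(1)] N(3)] N(2) by simp
    then have "(\<Prod>k<n. emeasure P (A k)) = 0"
      using C.emeasure_PiM[of "{..<n}" A] Aset by simp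
    then obtain k where k: "k < n" "emeasure P (A k) = 0" by (auto simp: prod_zero_iff)
    show ?thesis
    proof (cases "k = 0")
      case True then show ?thesis using k by (simp add: A_def)
    next
      case False
      then have E1: "emeasure P {x \<in> space P. a < L x} = 0" using k by (simp add: A_def)
      have "AE x in P. \<not> (a < L x)"
        by (rule AE_iff_measurable[THEN iffD2, OF _ _ E1]) auto
      then have "integral\<^sup>L P L \<le> integral\<^sup>L P (\<lambda>_. a)"
        using Li by (intro integral_mono_AE) auto
      then show ?thesis using int1 a1 by (simp add: P.prob_space)
    qed
  qed
qed



lemma ldp_RN:
  fixes M N :: "'a measure" and b :: real
  assumes M: "prob_space M" and N: "prob_space N" and sets: "sets N = sets M" and b: "1 \<le> b"
    and up: "\<And>B. B \<in> sets M \<Longrightarrow> emeasure N B \<le> ennreal b * emeasure M B"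
    and lo: "\<And>B. B \<in> sets M \<Longrightarrow> emeasure M B \<le> ennreal b * emeasure N B"
  shows "density M (RN_deriv M N) = N"
    and "AE x in M. ennreal (1 / b) \<le> RN_deriv M N x \<and> RN_deriv M N x \<le> ennreal b"
proof -
  interpret M: prob_space M by fact
  interpret N: prob_space N by fact
  let ?R = "RN_deriv M N"
  have ac: "absolutely_continuous M N"
    unfolding absolutely_continuous_def
  proof
    fix B assume "B \<in> null_sets M"
    then have B: "B \<in> sets M" "emeasure M B = 0" by auto
    then have "emeasure N B \<le> 0" using up[OF B(1)] by simp
    then show "B \<in> null_sets N" using B sets by auto
  qed
  show dens: "density M ?R = N" by (rule M.density_RN_deriv[OF ac sets])
  have eN: "\<And>B. B \<in> sets M \<Longrightarrow> emeasure N B = (\<integral>\<^sup>+ x. ?R x * indicator B x \<partial>M)"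
    using dens by (metis emeasure_density borel_measurable_RN_deriv)
  have upper: "AE x in M. ?R x \<le> ennreal b"
  proof (rule ccontr)
    assume nAE: "\<not> (AE x in M. ?R x \<le> ennreal b)"
    let ?B = "{x \<in> space M. ennreal b < ?R x}"
    have Bs: "?B \<in> sets M" by measurable
    have "(\<integral>\<^sup>+ x. ennreal b * indicator ?B x \<partial>M) < (\<integral>\<^sup>+ x. ?R x * indicator ?B x \<partial>M)"
    proof (rule nn_integral_less)
      show "(\<integral>\<^sup>+ x. ennreal b * indicator ?B x \<partial>M) \<noteq> \<infinity>"
        using Bs by (simp add: nn_integral_cmult_indicator M.emeasure_eq_measure ennreal_mult_eq_top_iff)
      show "AE x in M. ennreal b * indicator ?B x \<le> ?R x * indicator ?B x"
        by (auto intro!: AE_I2 simp: indicator_def less_imp_le)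
      show "\<not> (AE x in M. ?R x * indicator ?B x \<le> ennreal b * indicator ?B x)"
      proof
        assume "AE x in M. ?R x * indicator ?B x \<le> ennreal b * indicator ?B x"
        then have "AE x in M. ?R x \<le> ennreal b"
          using AE_space
        proof eventually_elim
          case (elim x) then show ?case by (cases "ennreal b < ?R x") (auto simp: indicator_def)
        qed
        with nAE show False by simp
      qed
    qed auto
    also have "\<dots> = emeasure N ?B" using eN[OF Bs] by simp
    also have "\<dots> \<le> ennreal b * emeasure M ?B" by (rule up[OF Bs])
    also have "\<dots> = (\<integral>\<^sup>+ x. ennreal b * indicator ?B x \<partial>M)"
      using Bs by (simp add: nn_integral_cmult_indicator)
    finally show False by simp
  qed
  have lower: "AE x in M. ennreal (1 / b) \<le> ?R x"
  proof (rule ccontr)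
    assume nAE: "\<not> (AE x in M. ennreal (1 / b) \<le> ?R x)"
    let ?B = "{x \<in> space M. ?R x < ennreal (1 / b)}"
    have Bs: "?B \<in> sets M" by measurable
    have "(\<integral>\<^sup>+ x. ?R x * indicator ?B x \<partial>M) < (\<integral>\<^sup>+ x. ennreal (1 / b) * indicator ?B x \<partial>M)"
    proof (rule nn_integral_less)
      show "(\<integral>\<^sup>+ x. ?R x * indicator ?B x \<partial>M) \<noteq> \<infinity>"
        using eN[OF Bs] N.emeasure_finite[of ?B] by (simp add: top_unique)
      show "AE x in M. ?R x * indicator ?B x \<le> ennreal (1 / b) * indicator ?B x"
        by (auto intro!: AE_I2 simp: indicator_def less_imp_le)
      show "\<not> (AE x in M. ennreal (1 / b) * indicator ?B x \<le> ?R x * indicator ?B x)"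
      proof
        assume "AE x in M. ennreal (1 / b) * indicator ?B x \<le> ?R x * indicator ?B x"
        then have "AE x in M. ennreal (1 / b) \<le> ?R x"
          using AE_space
        proof eventually_elim
          case (elim x) then show ?case by (cases "?R x < ennreal (1 / b)") (auto simp: indicator_def)
        qed
        with nAE show False by simp
      qed
    qed auto
    then have lt: "emeasure N ?B < ennreal (1 / b) * emeasure M ?B"
      using eN[OF Bs] Bs by (simp add: nn_integral_cmult_indicator)
    have "emeasure M ?B \<le> ennreal b * emeasure N ?B" by (rule lo[OF Bs])
    also have "\<dots> < ennreal b * (ennreal (1 / b) * emeasure M ?B)"
      using lt b by (intro ennreal_mult_strict_left_mono) auto
    also have "\<dots> = emeasure M ?B"
      using b by (simp add: mult.assoc[symmetric] ennreal_mult[symmetric])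
    finally show False by simp
  qed
  show "AE x in M. ennreal (1 / b) \<le> ?R x \<and> ?R x \<le> ennreal b"
    using upper lower by eventually_elim auto
qed



lemma Wch_facts:
  assumes rho: "anchored H \<rho>"
  shows "prob_space (Wch H \<rho> k)" and "sets (Wch H \<rho> k) = sets \<rho>" and "space (Wch H \<rho> k) = space \<rho>"
proof -
  have P: "prob_space \<rho>" and sp: "space \<rho> = Xd H" and st: "sets \<rho> = sets (restrict_space borel (Xd H))"
    and ii: "integrable \<rho> (\<lambda>x. x)" and i0: "integral\<^sup>L \<rho> (\<lambda>x. x) = 0"
    using rho unfolding anchored_def by auto
  interpret prob_space \<rho> by fact
  let ?f = "\<lambda>x. 1 + gam H k \<bullet> x"
  have "?f \<in> borel_measurable (restrict_space borel (Xd H))"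
    by (intro measurable_restrict_space1) measurable
  then have fm: "?f \<in> borel_measurable \<rho>" using st by (simp cong: measurable_cong_sets)
  have fnn: "\<And>x. x \<in> space \<rho> \<Longrightarrow> 0 \<le> ?f x" using sp by (auto simp: Xd_def)
  have fi: "integrable \<rho> ?f" using ii by (intro Bochner_Integration.integrable_add) auto
  have fint: "integral\<^sup>L \<rho> ?f = 1"
    using ii i0 by (subst Bochner_Integration.integral_add) (auto simp: prob_space)
  show "sets (Wch H \<rho> k) = sets \<rho>" "space (Wch H \<rho> k) = space \<rho>" unfolding Wch_def by auto
  show "prob_space (Wch H \<rho> k)"
  proof
    have "emeasure (Wch H \<rho> k) (space (Wch H \<rho> k)) = (\<integral>\<^sup>+ x. ennreal (?f x) \<partial>\<rho>)"
      unfolding Wch_def using fm by (simp add: emeasure_density nn_integral_density[symmetric])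
    also have "\<dots> = ennreal (integral\<^sup>L \<rho> ?f)"
      using fi fnn by (intro nn_integral_eq_integral) (auto intro!: AE_I2)
    finally show "emeasure (Wch H \<rho> k) (space (Wch H \<rho> k)) = 1" using fint by simp
  qed
qed

lemma int_one:
  fixes P :: "'a measure" and L :: "'a \<Rightarrow> real"
  assumes P: "prob_space P" and Pg: "prob_space (density P (\<lambda>x. ennreal (L x)))"
    and L[measurable]: "L \<in> borel_measurable P"
    and bnd: "\<And>x. x \<in> space P \<Longrightarrow> 0 \<le> L x \<and> L x \<le> B"
  shows "integral\<^sup>L P L = 1"
proof -
  interpret P: prob_space P by fact
  interpret Q: prob_space "density P (\<lambda>x. ennreal (L x))" by fact
  have Li: "integrable P L"
    by (rule P.integrable_const_bound[where B=B]) (use bnd in \<open>auto intro!: AE_I2\<close>)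
  have "1 = emeasure (density P (\<lambda>x. ennreal (L x))) (space P)"
    using Q.emeasure_space_1 by simp
  also have "\<dots> = (\<integral>\<^sup>+ x. ennreal (L x) \<partial>P)"
    by (simp add: emeasure_density nn_integral_density[symmetric])
  also have "\<dots> = ennreal (integral\<^sup>L P L)"
    using Li bnd by (intro nn_integral_eq_integral) (auto intro!: AE_I2)
  finally have "ennreal (integral\<^sup>L P L) = 1" by simp
  moreover have "0 \<le> integral\<^sup>L P L" using bnd by (intro integral_nonneg_AE) (auto intro!: AE_I2)
  ultimately show ?thesis by (metis ennreal_1 ennreal_inj zero_le_one)
qed

lemma two_point:
  fixes M :: "'a measure" and f :: "'a \<Rightarrow> real" and h :: "real \<Rightarrow> ennreal"
  assumes f[measurable]: "f \<in> borel_measurable M" and ab: "a \<noteq> b"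
    and AE: "AE x in M. f x = a \<or> f x = b"
  shows "(\<integral>\<^sup>+ x. h (f x) \<partial>M) = h a * emeasure M {x \<in> space M. f x = a} + h b * emeasure M {x \<in> space M. f x = b}"
proof -
  have s1: "{x \<in> space M. f x = a} \<in> sets M" by measurable
  have s2: "{x \<in> space M. f x = b} \<in> sets M" by measurable
  have "(\<integral>\<^sup>+ x. h (f x) \<partial>M) = (\<integral>\<^sup>+ x. h a * indicator {x \<in> space M. f x = a} x + h b * indicator {x \<in> space M. f x = b} x \<partial>M)"
  proof (rule nn_integral_cong_AE)
    show "AE x in M. h (f x) = h a * indicator {x \<in> space M. f x = a} x + h b * indicator {x \<in> space M. f x = b} x"
      using AE AE_space
    proof eventually_elim
      case (elim x) then show ?case using ab by (auto simp: indicator_def)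
    qed
  qed
  also have "\<dots> = h a * emeasure M {x \<in> space M. f x = a} + h b * emeasure M {x \<in> space M. f x = b}"
    using s1 s2 by (subst nn_integral_add) (auto simp: nn_integral_cmult_indicator)
  finally show ?thesis .
qed



lemma brr_space: "space (brr e k) = {1, 2}" and brr_sets: "sets (brr e k) = Pow {1, 2}"
  unfolding brr_def by (simp_all add: space_point_measure sets_point_measure)

lemma brr_prob: assumes k: "k = 1 \<or> k = 2" shows "prob_space (brr e k)"
proof
  have "emeasure (brr e k) (space (brr e k))
      = ennreal (if 1 = k then exp e / (1 + exp e) else 1 / (1 + exp e))
        + ennreal (if 2 = k then exp e / (1 + exp e) else 1 / (1 + exp e))"
    unfolding brr_space unfolding brr_def by (subst emeasure_point_measure_finite) auto
  also have "\<dots> = 1"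
  proof -
    have p: "0 < 1 + exp e" by (simp add: add_pos_pos)
    have "ennreal (exp e / (1 + exp e)) + ennreal (1 / (1 + exp e)) = ennreal (exp e / (1 + exp e) + 1 / (1 + exp e))"
      using p by (intro ennreal_plus[symmetric]) auto
    also have "exp e / (1 + exp e) + 1 / (1 + exp e) = 1" using p by (simp add: field_simps)
    finally have *: "ennreal (exp e / (1 + exp e)) + ennreal (1 / (1 + exp e)) = 1" by simp
    show ?thesis using * k by (auto simp: add.commute)
  qed
  finally show "emeasure (brr e k) (space (brr e k)) = 1" .
qed

lemma brr_density:
  "brr e 2 = density (brr e 1) (\<lambda>y. ennreal (if y = 1 then exp (- e) else exp e))"
proof -
  have p: "0 < 1 + exp e" by (simp add: add_pos_pos)
  have "density (brr e 1) (\<lambda>y. ennreal (if y = 1 then exp (- e) else exp e))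
      = density (count_space {1::nat, 2}) (\<lambda>y. ennreal (if y = 1 then exp e / (1 + exp e) else 1 / (1 + exp e))
            * ennreal (if y = 1 then exp (- e) else exp e))"
    unfolding brr_def point_measure_def by (subst density_density_eq) auto
  also have "\<dots> = density (count_space {1::nat, 2}) (\<lambda>y. ennreal (if y = 2 then exp e / (1 + exp e) else 1 / (1 + exp e)))"
  proof (rule density_cong)
    show "AE y in count_space {1::nat, 2}. ennreal (if y = 1 then exp e / (1 + exp e) else 1 / (1 + exp e)) * ennreal (if y = 1 then exp (- e) else exp e)
        = ennreal (if y = 2 then exp e / (1 + exp e) else 1 / (1 + exp e))"
    proof (rule AE_I2)
      fix y :: nat assume "y \<in> space (count_space {1::nat, 2})"
      then have y: "y = 1 \<or> y = 2" by auto
      have e1: "exp e / (1 + exp e) * exp (- e) = 1 / (1 + exp e)"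
        by (simp add: exp_minus field_simps)
      have e2: "1 / (1 + exp e) * exp e = exp e / (1 + exp e)" by simp
      show "ennreal (if y = 1 then exp e / (1 + exp e) else 1 / (1 + exp e)) * ennreal (if y = 1 then exp (- e) else exp e)
        = ennreal (if y = 2 then exp e / (1 + exp e) else 1 / (1 + exp e))"
        using y p e1 e2 by (auto simp: ennreal_mult[symmetric])
    qed
  qed auto
  finally show ?thesis unfolding brr_def point_measure_def by simp
qed



lemma distr_emeasure_nn:
  assumes f: "f \<in> measurable M N" and A: "A \<in> sets N"
  shows "emeasure (distr M N f) A = (\<integral>\<^sup>+ x. indicator A (f x) \<partial>M)"
proof -
  have "emeasure (distr M N f) A = emeasure M (f -` A \<inter> space M)" by (rule emeasure_distr[OF f A])
  also have "\<dots> = (\<integral>\<^sup>+ x. indicator (f -` A \<inter> space M) x \<partial>M)"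
    using measurable_sets[OF f A] by (rule nn_integral_indicator[symmetric])
  also have "\<dots> = (\<integral>\<^sup>+ x. indicator A (f x) \<partial>M)" by (intro nn_integral_cong) (auto simp: indicator_def)
  finally show ?thesis .
qed

lemma sum_12:
  fixes g :: "nat \<Rightarrow> ennreal"
  assumes "A \<subseteq> {1, 2}"
  shows "(\<Sum>y\<in>A. g y) = indicator A 1 * g 1 + indicator A 2 * g 2"
proof -
  have "A = {1, 2} \<inter> A" using assms by auto
  then have "(\<Sum>y\<in>A. g y) = (\<Sum>y\<in>{1, 2}. if y \<in> A then g y else 0)"
    using sum.inter_restrict[of "{1::nat, 2}" g A] by simp
  then show ?thesis by (simp add: indicator_def)
qed

lemma main_abstract:
  fixes Wi Wj :: "'a measure" and e :: real and n :: nat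
  assumes Wi: "prob_space Wi" and Wj: "prob_space Wj" and sets: "sets Wj = sets Wi"
    and e: "e \<ge> 0" and n: "n \<ge> 1"
    and up: "\<And>B. B \<in> sets Wi \<Longrightarrow> emeasure Wj B \<le> ennreal (exp e) * emeasure Wi B"
    and lo: "\<And>B. B \<in> sets Wi \<Longrightarrow> emeasure Wi B \<le> ennreal (exp e) * emeasure Wj B"
    and H10: "\<And>\<alpha>. \<alpha> \<ge> 1 \<Longrightarrow> hockey \<alpha> (Q1 n Wi Wj) (Q0 n Wi Wj)
        = hockey \<alpha> (Q1 n (brr e 1) (brr e 2)) (Q0 n (brr e 1) (brr e 2))"
  shows "mu_lr Wi Wj = mu_star e
    \<and> (e > 0 \<longrightarrow>
         (AE x in Wi. LR Wi Wj x \<in> {exp (-e), exp e})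
       \<and> distr Wi (count_space {1, 2}) (merge_lr e Wi Wj) = brr e 1
       \<and> distr Wj (count_space {1, 2}) (merge_lr e Wi Wj) = brr e 2)"
proof -
  interpret Wi: prob_space Wi by fact
  interpret Wj: prob_space Wj by fact
  define a where "a = exp (- e)"
  define b where "b = exp e"
  have b1: "1 \<le> b" unfolding b_def using e by simp
  have ab1: "a * b = 1" unfolding a_def b_def by (simp add: exp_minus)
  have a_inv: "1 / b = a" unfolding a_def b_def by (simp add: exp_minus field_simps)
  have a0: "0 < a" unfolding a_def by simp
  have a1: "a \<le> 1" unfolding a_def using e by simp
  let ?R = "RN_deriv Wi Wj"
  have upb: "\<And>B. B \<in> sets Wi \<Longrightarrow> emeasure Wj B \<le> ennreal b * emeasure Wi B" using up unfolding b_def .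
  have lob: "\<And>B. B \<in> sets Wi \<Longrightarrow> emeasure Wi B \<le> ennreal b * emeasure Wj B" using lo unfolding b_def .
  have dens: "density Wi ?R = Wj" by (rule ldp_RN(1)[OF Wi Wj sets b1 upb lob])
  have Rb0: "AE x in Wi. ennreal (1 / b) \<le> ?R x \<and> ?R x \<le> ennreal b" by (rule ldp_RN(2)[OF Wi Wj sets b1 upb lob])
  then have Rb: "AE x in Wi. ennreal a \<le> ?R x \<and> ?R x \<le> ennreal b" unfolding a_inv .
  define L where "L x = (if a \<le> LR Wi Wj x \<and> LR Wi Wj x \<le> b then LR Wi Wj x else 1)" for x
  have LRm[measurable]: "LR Wi Wj \<in> borel_measurable Wi" unfolding LR_def by measurable
  have Lm[measurable]: "L \<in> borel_measurable Wi" unfolding L_def by measurable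
  have Lb: "\<And>x. a \<le> L x \<and> L x \<le> b" unfolding L_def using a1 b1 by auto
  have AEL: "AE x in Wi. L x = LR Wi Wj x \<and> ennreal (L x) = ?R x"
    using Rb
  proof eventually_elim
    case (elim x)
    then have fin: "?R x \<noteq> \<top>" by (auto simp: top_unique)
    then obtain r where r: "?R x = ennreal r" "0 \<le> r" by (cases "?R x") auto
    have "a \<le> r" "r \<le> b" using elim r a0 b1 by (auto simp: ennreal_le_iff)
    then show ?case using r unfolding L_def LR_def by auto
  qed
  have WjL: "Wj = density Wi (\<lambda>x. ennreal (L x))"
  proof -
    have h: "density Wi (\<lambda>x. ennreal (L x)) = density Wi ?R"
      using AEL by (intro density_cong) auto
    show ?thesis by (rule sym, rule trans[OF h dens])
  qed
  have WjP: "prob_space (density Wi (\<lambda>x. ennreal (L x)))" by (subst WjL[symmetric]) (rule Wj)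
  have intL: "integral\<^sup>L Wi L = 1"
  proof (rule int_one[OF Wi WjP Lm, of b])
    fix x show "0 \<le> L x \<and> L x \<le> b" using Lb[of x] a0 by linarith
  qed
  have AEpos: "AE x in Wi. L x = a \<or> L x = b" if epos: "e > 0"
  proof -
    have a1': "a < 1" unfolding a_def using epos by simp
    have b1': "1 < b" unfolding b_def using epos by simp
    define c where "c = b - (b - a) / (2 * real n)"
    have c1: "1 \<le> c"
    proof -
      have d: "(b - a) / (2 * real n) \<le> (b - a) / 2"
        using n a1' b1' by (intro divide_left_mono) auto
      have "2 \<le> a + b"
      proof -
        have "0 \<le> (b - 1)^2" by simp
        then have "2 * b \<le> b * b + 1" by (simp add: power2_eq_square algebra_simps)
        also have "\<dots> = b * b + a * b" using ab1 by simp
        finally have "2 * b \<le> (a + b) * b" by (simp add: algebra_simps)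
        then show ?thesis using b1' by simp
      qed
      moreover have "b - (b - a) / 2 = (a + b) / 2" by (simp add: field_simps)
      ultimately have "1 \<le> b - (b - a) / 2" by (simp add: field_simps)
      also have "\<dots> \<le> b - (b - a) / (2 * real n)" using d by (rule diff_left_mono)
      finally show ?thesis unfolding c_def .
    qed
    define Ls where "Ls y = (if y = (1::nat) then a else b)" for y
    have B1: "prob_space (brr e 1)" by (rule brr_prob) simp
    have B2eq: "brr e 2 = density (brr e 1) (\<lambda>y. ennreal (Ls y))"
      unfolding Ls_def a_def b_def by (rule brr_density)
    have B2: "prob_space (density (brr e 1) (\<lambda>y. ennreal (Ls y)))"
      unfolding B2eq[symmetric] by (rule brr_prob) simp
    have Lsm: "Ls \<in> borel_measurable (brr e 1)"
    proof -
      have sc: "sets (brr e 1) = sets (count_space {1::nat, 2})" by (simp add: brr_sets)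
      show ?thesis by (subst measurable_cong_sets[OF sc refl]) simp
    qed
    have Lsb: "\<And>y. a \<le> Ls y \<and> Ls y \<le> b" unfolding Ls_def using a1 b1 by auto
    have intLs: "integral\<^sup>L (brr e 1) Ls = 1"
    proof (rule int_one[OF B1 B2 Lsm, of b])
      fix x show "0 \<le> Ls x \<and> Ls x \<le> b" using Lsb[of x] a0 by linarith
    qed
    let ?VB = "(b - c) * ((1 - a) / (b - a)) ^ n"
    have hB: "hockey c (Q1 n (brr e 1) (brr e 2)) (Q0 n (brr e 1) (brr e 2))
        = (\<integral>x. max 0 ((\<Sum>m<n. Ls (x m)) / real n - c) \<partial>PiM {..<n} (\<lambda>_. brr e 1))"
      unfolding B2eq
      by (rule hockey_eq[OF B1 B2 Lsm n]) (use Lsb a0 in \<open>auto intro: order_trans[OF less_imp_le[OF a0]]\<close>)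
    have vB: "(\<integral>x. max 0 ((\<Sum>m<n. Ls (x m)) / real n - c) \<partial>PiM {..<n} (\<lambda>_. brr e 1)) = ?VB"
      unfolding c_def
      by (rule core(2)[OF B1 Lsm _ a0 a1' b1' intLs n]) (use a1 b1 in \<open>auto simp: Ls_def Lsb\<close>)
    have hW: "hockey c (Q1 n Wi Wj) (Q0 n Wi Wj)
        = (\<integral>x. max 0 ((\<Sum>m<n. L (x m)) / real n - c) \<partial>PiM {..<n} (\<lambda>_. Wi))"
      unfolding WjL
      by (rule hockey_eq[OF Wi WjP Lm n]) (use Lb a0 in \<open>auto intro: order_trans[OF less_imp_le[OF a0]]\<close>)
    have eqW: "(\<integral>x. max 0 ((\<Sum>m<n. L (x m)) / real n - c) \<partial>PiM {..<n} (\<lambda>_. Wi)) = ?VB"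
      using hW H10[OF c1] hB vB by simp
    have null: "emeasure Wi {x \<in> space Wi. a < L x \<and> L x < b} = 0"
      by (rule core(3)[OF Wi Lm _ a0 a1' b1' intL n]) (use Lb eqW c_def in auto)
    have s: "{x \<in> space Wi. a < L x \<and> L x < b} \<in> sets Wi" by measurable
    show ?thesis
    proof (rule AE_iff_measurable[THEN iffD2, OF s _ null])
      show "{x \<in> space Wi. \<not> (L x = a \<or> L x = b)} = {x \<in> space Wi. a < L x \<and> L x < b}"
        using Lb by (auto simp: less_le)
    qed
  qed
  have AEab: "AE x in Wi. LR Wi Wj x = a \<or> LR Wi Wj x = b"
  proof (cases "e > 0")
    case True
    from AEpos[OF True] AEL show ?thesis by eventually_elim auto
  next
    case False
    then have "a = b" unfolding a_def b_def using e by simp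
    then have La: "\<And>x. L x = a" using Lb by (metis antisym)
    from AEL show ?thesis by eventually_elim (simp add: La)
  qed
  show ?thesis
  proof (cases "e > 0")
    case False
    then have e0: "e = 0" using e by simp
    then have aa: "a = 1" "b = 1" unfolding a_def b_def by auto
    have "distr Wi borel (LR Wi Wj) = return borel 1"
    proof (rule measure_eqI)
      show "sets (distr Wi borel (LR Wi Wj)) = sets (return borel 1)" by simp
    next
      fix A assume A: "A \<in> sets (distr Wi borel (LR Wi Wj))"
      then have Ab: "A \<in> sets borel" by simp
      have "emeasure (distr Wi borel (LR Wi Wj)) A = (\<integral>\<^sup>+ x. indicator A (LR Wi Wj x) \<partial>Wi)"
        using Ab by (intro distr_emeasure_nn) auto
      also have "\<dots> = (\<integral>\<^sup>+ x. indicator A (1::real) \<partial>Wi)"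
        using AEab aa by (intro nn_integral_cong_AE) (simp add: eventually_mono)
      also have "\<dots> = indicator A (1::real)" by (simp add: Wi.emeasure_space_1)
      finally show "emeasure (distr Wi borel (LR Wi Wj)) A = emeasure (return borel 1) A"
        using Ab by simp
    qed
    then show ?thesis using False e0 unfolding mu_lr_def mu_star_def by simp
  next
    case True
    have a1': "a < 1" unfolding a_def using True by simp
    have b1': "1 < b" unfolding b_def using True by simp
    have ab: "a \<noteq> b" using a1' b1' by simp
    define pa where "pa = measure Wi {x \<in> space Wi. LR Wi Wj x = a}"
    define pb where "pb = measure Wi {x \<in> space Wi. LR Wi Wj x = b}"
    have Ea: "emeasure Wi {x \<in> space Wi. LR Wi Wj x = a} = ennreal pa"
      unfolding pa_def by (rule Wi.emeasure_eq_measure)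
    have Eb: "emeasure Wi {x \<in> space Wi. LR Wi Wj x = b} = ennreal pb"
      unfolding pb_def by (rule Wi.emeasure_eq_measure)
    have pa0: "0 \<le> pa" "0 \<le> pb" unfolding pa_def pb_def by auto
    have tp: "\<And>h. (\<integral>\<^sup>+ x. h (LR Wi Wj x) \<partial>Wi) = h a * ennreal pa + h b * ennreal pb"
      using two_point[OF LRm ab AEab] Ea Eb by simp
    have "1 = (\<integral>\<^sup>+ x. 1 \<partial>Wi)" by (simp add: Wi.emeasure_space_1)
    also have "\<dots> = ennreal pa + ennreal pb" using tp[of "\<lambda>_. 1"] by simp
    also have "\<dots> = ennreal (pa + pb)" using pa0 by simp
    finally have "ennreal (pa + pb) = ennreal 1" by simp
    then have s1: "pa + pb = 1" using pa0 by (subst (asm) ennreal_inj) auto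
    have "1 = emeasure (density Wi (\<lambda>x. ennreal (L x))) (space Wi)"
      using Wj.emeasure_space_1 WjL sets_eq_imp_space_eq[OF sets] by simp
    also have "\<dots> = (\<integral>\<^sup>+ x. ennreal (L x) \<partial>Wi)"
      by (simp add: emeasure_density nn_integral_density[symmetric])
    also have "\<dots> = (\<integral>\<^sup>+ x. ennreal (LR Wi Wj x) \<partial>Wi)"
    proof (rule nn_integral_cong_AE)
      show "AE x in Wi. ennreal (L x) = ennreal (LR Wi Wj x)" using AEL by eventually_elim simp
    qed
    also have "\<dots> = ennreal a * ennreal pa + ennreal b * ennreal pb" by (rule tp)
    also have "\<dots> = ennreal (a * pa + b * pb)" using pa0 a0 b1 by (simp add: ennreal_mult ennreal_plus)
    finally have "ennreal (a * pa + b * pb) = ennreal 1" by simp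
    then have s2: "a * pa + b * pb = 1" using pa0 a0 b1 by (subst (asm) ennreal_inj) auto
    have "pa = 1 - pb" using s1 by simp
    then have "a * (1 - pb) + b * pb = 1" using s2 by simp
    then have "pb * (b - a) = 1 - a" by algebra
    then have pbv: "pb = (1 - a) / (b - a)" using ab by (simp add: eq_divide_eq)
    have pav: "pa = (b - 1) / (b - a)" using s1 pbv ab by (simp add: field_simps)
    have b0: "0 < b" using b1 by simp
    have ainv: "a = 1 / b" using a_inv by simp
    have nz: "b - a \<noteq> 0" "1 + b \<noteq> 0" using ab b0 by auto
    have pab: "pa = b / (1 + b)" unfolding pav
      by (subst frac_eq_eq[OF nz]) (use ab1 in algebra)
    have pbb: "pb = 1 / (1 + b)" unfolding pbv
      by (subst frac_eq_eq[OF nz]) (use ab1 in algebra)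
    have apa: "a * pa = 1 / (1 + b)" unfolding pab ainv using b0 by (simp add: field_simps)
    have bpb: "b * pb = b / (1 + b)" unfolding pbb by simp
    have mu: "mu_lr Wi Wj = mu_star e"
    proof -
      let ?D = "distr Wi borel (LR Wi Wj)"
      have "?D = measure_of (space ?D) (sets ?D) (emeasure ?D)" by (rule measure_of_of_measure[symmetric])
      also have "\<dots> = measure_of (space borel) (sets borel) (emeasure ?D)" by simp
      also have "\<dots> = measure_of (space borel) (sets borel)
         (\<lambda>A. \<Sum>t\<in>{a, b}. ennreal (if t = a then (b - 1) / (b - a) else (1 - a) / (b - a)) * emeasure (return borel t) A)"
      proof (rule measure_of_eq)
        show "sets borel \<subseteq> Pow (space borel)" by (rule sets.space_closed)
      next
        fix A assume "A \<in> sigma_sets (space borel) (sets (borel :: real measure))"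
        then have A: "A \<in> sets borel" using sets.sigma_sets_eq[of "borel :: real measure"] by simp
        have "emeasure ?D A = (\<integral>\<^sup>+ x. indicator A (LR Wi Wj x) \<partial>Wi)"
          using A by (intro distr_emeasure_nn) auto
        also have "\<dots> = indicator A a * ennreal pa + indicator A b * ennreal pb" by (rule tp)
        finally have DA: "emeasure ?D A = indicator A a * ennreal pa + indicator A b * ennreal pb" .
        then show "emeasure ?D A = (\<Sum>t\<in>{a, b}. ennreal (if t = a then (b - 1) / (b - a) else (1 - a) / (b - a)) * emeasure (return borel t) A)"
        proof -
          have two: "(\<Sum>t\<in>{a, b}. g t) = g a + g b" for g :: "real \<Rightarrow> ennreal" using ab by simp
          have ra: "emeasure (return borel a) A = indicator A a" using A by (rule emeasure_return)
          have rb: "emeasure (return borel b) A = indicator A b" using A by (rule emeasure_return)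
          show ?thesis unfolding two ra rb using DA ab pav pbv
            by (simp add: mult.commute)
        qed
      qed
      finally have "?D = measure_of (space borel) (sets borel)
         (\<lambda>A. \<Sum>t\<in>{a, b}. ennreal (if t = a then (b - 1) / (b - a) else (1 - a) / (b - a)) * emeasure (return borel t) A)" .
      then show ?thesis using True unfolding mu_lr_def mu_star_def mixture_def a_def b_def by simp
    qed
    define mg where "mg = merge_lr e Wi Wj"
    have mgdef: "\<And>x. mg x = (if LR Wi Wj x = a then 1 else 2)" unfolding mg_def merge_lr_def a_def by simp
    have mgm: "mg \<in> measurable Wi (count_space {1, 2})"
      unfolding mgdef[abs_def] by measurable
    have mgmj: "mg \<in> measurable Wj (count_space {1, 2})"
      using mgm by (subst measurable_cong_sets[OF sets refl])
    have d1: "distr Wi (count_space {1, 2}) mg = brr e 1"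
    proof (rule measure_eqI)
      show "sets (distr Wi (count_space {1, 2}) mg) = sets (brr e 1)" by (simp add: brr_sets)
    next
      fix A assume "A \<in> sets (distr Wi (count_space {1, 2}) mg)"
      then have A: "A \<subseteq> {1, 2}" by simp
      have "emeasure (distr Wi (count_space {1, 2}) mg) A = (\<integral>\<^sup>+ x. indicator A (mg x) \<partial>Wi)"
        using A by (intro distr_emeasure_nn[OF mgm]) auto
      also have "\<dots> = (\<integral>\<^sup>+ x. (\<lambda>t. indicator A (if t = a then 1 else 2::nat)) (LR Wi Wj x) \<partial>Wi)"
        by (simp add: mgdef)
      also have "\<dots> = indicator A (1::nat) * ennreal pa + indicator A (2::nat) * ennreal pb"
        using tp[of "\<lambda>t. indicator A (if t = a then 1 else 2::nat)"] ab by simp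
      also have "\<dots> = indicator A (1::nat) * ennreal (b / (1 + b)) + indicator A (2::nat) * ennreal (1 / (1 + b))"
        using pab pbb by (simp add: mult.commute)
      also have "\<dots> = (\<Sum>y\<in>A. ennreal (if y = 1 then exp e / (1 + exp e) else 1 / (1 + exp e)))"
        by (subst sum_12[OF A]) (simp add: b_def)
      also have "\<dots> = emeasure (brr e 1) A"
        unfolding brr_def by (rule emeasure_point_measure_finite[symmetric]) (use A in auto)
      finally show "emeasure (distr Wi (count_space {1, 2}) mg) A = emeasure (brr e 1) A" .
    qed
    have d2: "distr Wj (count_space {1, 2}) mg = brr e 2"
    proof (rule measure_eqI)
      show "sets (distr Wj (count_space {1, 2}) mg) = sets (brr e 2)" by (simp add: brr_sets)
    next
      fix A assume "A \<in> sets (distr Wj (count_space {1, 2}) mg)"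
      then have A: "A \<subseteq> {1, 2}" by simp
      have "emeasure (distr Wj (count_space {1, 2}) mg) A = (\<integral>\<^sup>+ x. indicator A (mg x) \<partial>Wj)"
        using A by (intro distr_emeasure_nn[OF mgmj]) auto
      also have "\<dots> = (\<integral>\<^sup>+ x. indicator A (mg x) \<partial>density Wi (\<lambda>x. ennreal (L x)))"
        by (subst WjL) (rule refl)
      also have "\<dots> = (\<integral>\<^sup>+ x. ennreal (L x) * indicator A (mg x) \<partial>Wi)"
      proof (rule nn_integral_density)
        show "(\<lambda>x. indicator A (mg x) :: ennreal) \<in> borel_measurable Wi"
          by (rule measurable_compose[OF mgm]) simp
      qed auto
      also have "\<dots> = (\<integral>\<^sup>+ x. (\<lambda>t. ennreal t * indicator A (if t = a then 1 else 2::nat)) (LR Wi Wj x) \<partial>Wi)"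
      proof (rule nn_integral_cong_AE)
        show "AE x in Wi. ennreal (L x) * indicator A (mg x) = (\<lambda>t. ennreal t * indicator A (if t = a then 1 else 2::nat)) (LR Wi Wj x)"
          using AEL by eventually_elim (simp add: mgdef)
      qed
      also have "\<dots> = ennreal a * indicator A (1::nat) * ennreal pa + ennreal b * indicator A (2::nat) * ennreal pb"
        using tp[of "\<lambda>t. ennreal t * indicator A (if t = a then 1 else 2::nat)"] ab by simp
      also have "\<dots> = indicator A (1::nat) * ennreal (a * pa) + indicator A (2::nat) * ennreal (b * pb)"
        using a0 b0 pa0 by (simp add: ennreal_mult mult_ac)
      also have "\<dots> = indicator A (1::nat) * ennreal (1 / (1 + b)) + indicator A (2::nat) * ennreal (b / (1 + b))"
        using apa bpb by simp
      also have "\<dots> = (\<Sum>y\<in>A. ennreal (if y = 2 then exp e / (1 + exp e) else 1 / (1 + exp e)))"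
        by (subst sum_12[OF A]) (simp add: b_def)
      also have "\<dots> = emeasure (brr e 2) A"
        unfolding brr_def by (rule emeasure_point_measure_finite[symmetric]) (use A in auto)
      finally show "emeasure (distr Wj (count_space {1, 2}) mg) A = emeasure (brr e 2) A" .
    qed
    have AEfin: "AE x in Wi. LR Wi Wj x \<in> {exp (-e), exp e}"
      using AEab unfolding a_def b_def by simp
    show ?thesis using mu AEfin d1 d2 unfolding mg_def by simp
  qed
qed

theorem theorem4p9:
  fixes \<epsilon>0 :: real and n :: nat
    and H :: "real^'k^'d" and \<rho> :: "(real^'k) measure" and i j :: 'd
  assumes eps: "\<epsilon>0 \<ge> 0" and n: "n \<ge> 1"
    and dim: "CARD('d) = CARD('k) + 1" and d2: "CARD('d) \<ge> 2"
    and H_orth: "transpose H ** H = mat 1"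
    and H_span: "range (\<lambda>c. H *v c) = {u :: real^'d. (\<Sum>l\<in>UNIV. u $ l) = 0}"
    and rho: "anchored H \<rho>"
    and ij: "i \<noteq> j"
    and LDP: "ldp \<epsilon>0 (Wch H \<rho>) UNIV"
    and H10: "\<And>\<alpha>. \<alpha> \<ge> 1 \<Longrightarrow>
       hockey \<alpha> (Q1 n (Wch H \<rho> i) (Wch H \<rho> j)) (Q0 n (Wch H \<rho> i) (Wch H \<rho> j))
       = hockey \<alpha> (Q1 n (brr \<epsilon>0 1) (brr \<epsilon>0 2)) (Q0 n (brr \<epsilon>0 1) (brr \<epsilon>0 2))"
    and H01: "\<And>\<alpha>. \<alpha> \<ge> 1 \<Longrightarrow>
       hockey \<alpha> (Q0 n (Wch H \<rho> i) (Wch H \<rho> j)) (Q1 n (Wch H \<rho> i) (Wch H \<rho> j))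
       = hockey \<alpha> (Q0 n (brr \<epsilon>0 1) (brr \<epsilon>0 2)) (Q1 n (brr \<epsilon>0 1) (brr \<epsilon>0 2))"
  shows "mu_lr (Wch H \<rho> i) (Wch H \<rho> j) = mu_star \<epsilon>0
    \<and> (\<epsilon>0 > 0 \<longrightarrow>
         (AE x in Wch H \<rho> i. LR (Wch H \<rho> i) (Wch H \<rho> j) x \<in> {exp (-\<epsilon>0), exp \<epsilon>0})
       \<and> distr (Wch H \<rho> i) (count_space {1, 2}) (merge_lr \<epsilon>0 (Wch H \<rho> i) (Wch H \<rho> j)) = brr \<epsilon>0 1
       \<and> distr (Wch H \<rho> j) (count_space {1, 2}) (merge_lr \<epsilon>0 (Wch H \<rho> i) (Wch H \<rho> j)) = brr \<epsilon>0 2)"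
proof -
  have Wi: "prob_space (Wch H \<rho> i)" and Wj: "prob_space (Wch H \<rho> j)"
    using Wch_facts(1)[OF rho] by auto
  have sets: "sets (Wch H \<rho> j) = sets (Wch H \<rho> i)" using Wch_facts(2)[OF rho] by simp
  have L: "\<And>i j B. B \<in> sets (Wch H \<rho> i) \<Longrightarrow> emeasure (Wch H \<rho> j) B \<le> ennreal (exp \<epsilon>0) * emeasure (Wch H \<rho> i) B"
    using LDP unfolding ldp_def by blast
  show ?thesis
  proof (rule main_abstract[OF Wi Wj sets eps n])
    fix B assume B: "B \<in> sets (Wch H \<rho> i)"
    show "emeasure (Wch H \<rho> j) B \<le> ennreal (exp \<epsilon>0) * emeasure (Wch H \<rho> i) B" by (rule L[OF B])
    show "emeasure (Wch H \<rho> i) B \<le> ennreal (exp \<epsilon>0) * emeasure (Wch H \<rho> j) B"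
      using B sets by (intro L) simp
  next
    fix \<alpha> :: real assume "1 \<le> \<alpha>"
    then show "hockey \<alpha> (Q1 n (Wch H \<rho> i) (Wch H \<rho> j)) (Q0 n (Wch H \<rho> i) (Wch H \<rho> j))
       = hockey \<alpha> (Q1 n (brr \<epsilon>0 1) (brr \<epsilon>0 2)) (Q0 n (brr \<epsilon>0 1) (brr \<epsilon>0 2))"
      by (rule H10)
  qed
qed


end
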